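(* Let $A$ be a finite alphabet. A sliding block code $\phi: A^{\mathbb{N}} \to A^{\mathbb{N}}$ is a local homeomorphism and $*$-commutes with the shift map $\sigma$ if and only if $\phi$ is a $k$-fold covering map (for some $k\in\mathbb{N}$) of the form $\phi=\tau_d$ for a regressive block map $d$.
   Context: $A$ is a finite set with the discrete topology; $\mathbb{N}=\{1,2,3,\dots\}$; $A^{\mathbb{N}}$ is the space of one-sided infinite sequences over $A$ with the product topology; $\sigma(x_1x_2x_3\cdots)=x_2x_3\cdots$. A block map is a function $d:A^n\to A$ ($n\in\mathbb{N}$), and $\tau_d: A^{\mathbb{N}}\to A^{\mathbb{N}}$ is $\tau_d(x)_i=d(x_i\cdots x_{i+n-1})$; a sliding block code is a map of the form $\tau_d$. The block map $d$ is regressive if for each fixed $x_1\cdots x_{n-1}\in A^{n-1}$ the map $A\to A$, $a\mapsto d(ax_1\cdots x_{n-1})$, is bijective. A continuous map $f:X\to Y$ is a local homeomorphism if every $x\in X$ has an open neighborhood $U$ such that $f(U)$ is open in $Y$ and $f:U\to f(U)$ is a homeomorphism. Two functions $S,T: X\to X$ $*$-commute if $ST=TS$ and for every $(y,z)$ with $S(y)=T(z)$ there exists a unique $x$ with $T(x)=y$ and $S(x)=z$. For a continuous surjection $p:E\to B$, an open set $U\subseteq B$ is evenly covered if $p^{-1}(U)$ is a union of pairwise disjoint open sets $V_\alpha$ each of which $p$ maps homeomorphically onto $U$; $p$ is a covering map if every point of $B$ has an evenly covered open neighborhood, and a $k$-fold covering map if moreover $|p^{-1}(b)|=k$ for every $b\in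 B$. *)

theory Defs
  imports "HOL-Analysis.Analysis"
begin

text \<open>The space A^N (indices shifted to start at 0) with the product of discrete topologies.\<close>
definition seq_top :: "(nat \<Rightarrow> 'a) topology" where
  "seq_top = product_topology (\<lambda>_. discrete_topology UNIV) UNIV"

definition shift :: "(nat \<Rightarrow> 'a) \<Rightarrow> (nat \<Rightarrow> 'a)" where
  "shift x = (\<lambda>i. x (Suc i))"

text \<open>A block map d : A^n \<rightarrow> A is represented by a function on lists, of which
  only the values on lists of length n matter.\<close>
definition tau :: "nat \<Rightarrow> ('a list \<Rightarrow> 'a) \<Rightarrow> (nat \<Rightarrow> 'a) \<Rightarrow> (nat \<Rightarrow> 'a)" where
  "tau n d x = (\<lambda>i. d (map x [i..<i+n]))"

definition sliding_block_code :: "((nat \<Rightarrow> 'a) \<Rightarrow> (nat \<Rightarrow> 'a)) \<Rightarrow> bool" where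
  "sliding_block_code \<phi> \<longleftrightarrow> (\<exists>n d. n \<ge> 1 \<and> \<phi> = tau n d)"

definition regressive :: "nat \<Rightarrow> ('a list \<Rightarrow> 'a) \<Rightarrow> bool" where
  "regressive n d \<longleftrightarrow> n \<ge> 1 \<and>
     (\<forall>w. length w = n - 1 \<longrightarrow> bij (\<lambda>a. d (a # w)))"

definition local_homeo :: "'a topology \<Rightarrow> 'b topology \<Rightarrow> ('a \<Rightarrow> 'b) \<Rightarrow> bool" where
  "local_homeo X Y f \<longleftrightarrow> continuous_map X Y f \<and>
     (\<forall>x\<in>topspace X. \<exists>U. openin X U \<and> x \<in> U \<and> openin Y (f ` U) \<and>
        homeomorphic_map (subtopology X U) (subtopology Y (f ` U)) f)"

definition star_commute :: "('a \<Rightarrow> 'a) \<Rightarrow> ('a \<Rightarrow> 'a) \<Rightarrow> bool" where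
  "star_commute S T \<longleftrightarrow> S \<circ> T = T \<circ> S \<and>
     (\<forall>y z. S y = T z \<longrightarrow> (\<exists>!x. T x = y \<and> S x = z))"

definition evenly_covered :: "'a topology \<Rightarrow> 'b topology \<Rightarrow> ('a \<Rightarrow> 'b) \<Rightarrow> 'b set \<Rightarrow> bool" where
  "evenly_covered E B p U \<longleftrightarrow> openin B U \<and>
     (\<exists>\<V>. (\<forall>V\<in>\<V>. openin E V \<and> homeomorphic_map (subtopology E V) (subtopology B U) p) \<and>
          pairwise disjnt \<V> \<and> \<Union>\<V> = {x \<in> topspace E. p x \<in> U})"

definition covering_map :: "'a topology \<Rightarrow> 'b topology \<Rightarrow> ('a \<Rightarrow> 'b) \<Rightarrow> bool" where
  "covering_map E B p \<longleftrightarrow> continuous_map E B p \<and> p ` topspace E = topspace B \<and>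
     (\<forall>b\<in>topspace B. \<exists>U. b \<in> U \<and> evenly_covered E B p U)"

definition k_fold_covering_map :: "nat \<Rightarrow> 'a topology \<Rightarrow> 'b topology \<Rightarrow> ('a \<Rightarrow> 'b) \<Rightarrow> bool" where
  "k_fold_covering_map k E B p \<longleftrightarrow> covering_map E B p \<and>
     (\<forall>b\<in>topspace B. finite {x \<in> topspace E. p x = b} \<and> card {x \<in> topspace E. p x = b} = k)"

end

theory Submission
  imports Defs
begin


definition cyl :: "nat \<Rightarrow> (nat \<Rightarrow> 'a) \<Rightarrow> (nat \<Rightarrow> 'a) set" where
  "cyl m x = {y. \<forall>i<m. y i = x i}"

lemma topspace_seq_top [simp]: "topspace seq_top = UNIV"
  by (simp add: seq_top_def)

lemma PiE_U: "y \<in> Pi\<^sub>E UNIV U \<longleftrightarrow> (\<forall>i. y i \<in> U i)"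
  by (simp add: PiE_UNIV_domain Pi_iff)

lemma openin_seq_top: "openin seq_top S \<longleftrightarrow> (\<forall>x\<in>S. \<exists>m. cyl m x \<subseteq> S)"
proof
  assume "openin seq_top S"
  then have H: "\<forall>x\<in>S. \<exists>U. finite {i \<in> UNIV. U i \<noteq> topspace (discrete_topology (UNIV::'a set))} \<and>
      (\<forall>i\<in>UNIV. openin (discrete_topology UNIV) (U i)) \<and> x \<in> Pi\<^sub>E UNIV U \<and> Pi\<^sub>E UNIV U \<subseteq> S"
    unfolding seq_top_def openin_product_topology_alt .
  show "\<forall>x\<in>S. \<exists>m. cyl m x \<subseteq> S"
  proof
    fix x assume "x \<in> S"
    then obtain U where U: "finite {i \<in> UNIV. U i \<noteq> topspace (discrete_topology (UNIV::'a set))}"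
      "x \<in> Pi\<^sub>E UNIV U" "Pi\<^sub>E UNIV U \<subseteq> S"
      using H by blast
    have "finite {i. U i \<noteq> UNIV}" using U(1) by simp
    then obtain m where m: "\<And>i. U i \<noteq> UNIV \<Longrightarrow> i < m"
      using finite_nat_bounded[of "{i. U i \<noteq> UNIV}"] by (auto simp: lessThan_def)
    have "cyl m x \<subseteq> Pi\<^sub>E UNIV U"
    proof
      fix y assume "y \<in> cyl m x"
      then have y: "\<And>i. i < m \<Longrightarrow> y i = x i" by (simp add: cyl_def)
      have "y i \<in> U i" for i
      proof (cases "i < m")
        case True then show ?thesis using y U(2) by (simp add: PiE_U)
      next
        case False then show ?thesis using m by blast
      qed
      then show "y \<in> Pi\<^sub>E UNIV U" by (simp add: PiE_U)
    qed
    then show "\<exists>m. cyl m x \<subseteq> S" using U(3) by blast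
  qed
next
  assume H: "\<forall>x\<in>S. \<exists>m. cyl m x \<subseteq> S"
  show "openin seq_top S"
    unfolding seq_top_def openin_product_topology_alt
  proof (intro ballI)
    fix x assume "x \<in> S"
    then obtain m where m: "cyl m x \<subseteq> S" using H by blast
    define U where "U = (\<lambda>i. if i < m then {x i} else (UNIV::'a set))"
    have "finite {i \<in> UNIV. U i \<noteq> topspace (discrete_topology UNIV)}"
      by (rule finite_subset[of _ "{..<m}"]) (auto simp: U_def)
    moreover have "Pi\<^sub>E UNIV U = cyl m x"
    proof (intro set_eqI iffI)
      fix y assume "y \<in> Pi\<^sub>E UNIV U"
      then have "y i \<in> U i" for i by (simp add: PiE_U)
      then show "y \<in> cyl m x" by (simp add: U_def cyl_def) (metis singletonD)
    next
      fix y assume "y \<in> cyl m x"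
      then show "y \<in> Pi\<^sub>E UNIV U" by (simp add: U_def cyl_def PiE_U)
    qed
    moreover have "x \<in> cyl m x" by (simp add: cyl_def)
    moreover have "\<forall>i\<in>UNIV. openin (discrete_topology UNIV) (U i)" by simp
    ultimately show "\<exists>U. finite {i \<in> UNIV. U i \<noteq> topspace (discrete_topology UNIV)} \<and>
        (\<forall>i\<in>UNIV. openin (discrete_topology UNIV) (U i)) \<and> x \<in> Pi\<^sub>E UNIV U \<and> Pi\<^sub>E UNIV U \<subseteq> S"
      using m by metis
  qed
qed

lemma cyl_self [simp]: "x \<in> cyl m x" by (simp add: cyl_def)

lemma cyl_mono: "m \<le> m' \<Longrightarrow> cyl m' x \<subseteq> cyl m x" by (auto simp: cyl_def)

lemma cyl_eq: "y \<in> cyl m x \<Longrightarrow> cyl m y = cyl m x" by (auto simp: cyl_def)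

lemma cyl_sym: "y \<in> cyl m x \<Longrightarrow> x \<in> cyl m y" by (auto simp: cyl_def)

lemma openin_cyl: "openin seq_top (cyl m x)"
  unfolding openin_seq_top by (metis cyl_eq order_refl)

lemma compact_seq_top: "compact_space (seq_top :: (nat \<Rightarrow> 'a::finite) topology)"
  unfolding seq_top_def
  by (simp add: compact_space_product_topology compact_space_discrete_topology)

lemma uniform:
  fixes Q :: "nat \<Rightarrow> (nat \<Rightarrow> 'a::finite) \<Rightarrow> bool"
  assumes H: "\<And>x. \<exists>m l. \<forall>y\<in>cyl m x. Q l y"
    and mono: "\<And>l l' y. Q l y \<Longrightarrow> l \<le> l' \<Longrightarrow> Q l' y"
  shows "\<exists>L. \<forall>y. Q L y"
proof -
  have "\<forall>x. \<exists>p. \<forall>y\<in>cyl (fst p) x. Q (snd p) y"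
  proof
    fix x
    obtain m l where "\<forall>y\<in>cyl m x. Q l y" using H[of x] by (elim exE)
    then show "\<exists>p. \<forall>y\<in>cyl (fst p) x. Q (snd p) y" by (intro exI[of _ "(m,l)"]) simp
  qed
  then have "\<exists>g. \<forall>x. \<forall>y\<in>cyl (fst (g x)) x. Q (snd (g x)) y" by (rule choice)
  then obtain g where g: "\<forall>x. \<forall>y\<in>cyl (fst (g x)) x. Q (snd (g x)) y" by (elim exE)
  define mf where "mf x = fst (g x)" for x
  define lf where "lf x = snd (g x)" for x
  have mlf: "\<And>x y. y \<in> cyl (mf x) x \<Longrightarrow> Q (lf x) y" using g unfolding mf_def lf_def by blast
  have "compactin seq_top (UNIV :: (nat \<Rightarrow> 'a) set)"
    using compact_seq_top unfolding compact_space_def by simp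
  then have C: "\<forall>\<U>. (\<forall>U \<in> \<U>. openin seq_top U) \<and> (UNIV :: (nat \<Rightarrow> 'a) set) \<subseteq> \<Union>\<U>
          \<longrightarrow> (\<exists>\<F>. finite \<F> \<and> \<F> \<subseteq> \<U> \<and> UNIV \<subseteq> \<Union>\<F>)"
    unfolding compactin_def by (rule conjunct2)
  have o: "\<forall>U \<in> (\<lambda>x. cyl (mf x) x) ` UNIV. openin seq_top U"
    by (auto simp: openin_cyl)
  have c: "(UNIV :: (nat \<Rightarrow> 'a) set) \<subseteq> \<Union>((\<lambda>x. cyl (mf x) x) ` UNIV)"
    by auto
  have "\<exists>\<F>. finite \<F> \<and> \<F> \<subseteq> (\<lambda>x. cyl (mf x) x) ` UNIV \<and> UNIV \<subseteq> \<Union>\<F>"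
    using C o c by blast
  then obtain \<F> where F: "finite \<F>" "\<F> \<subseteq> (\<lambda>x. cyl (mf x) x) ` UNIV" "UNIV \<subseteq> \<Union>\<F>"
    by (elim exE conjE)
  have "\<exists>P. P \<subseteq> UNIV \<and> finite P \<and> \<F> = (\<lambda>x. cyl (mf x) x) ` P"
    by (rule finite_subset_image[OF F(1) F(2)])
  then obtain P where P: "finite P" "\<F> = (\<lambda>x. cyl (mf x) x) ` P"
    by (elim exE conjE)
  define L where "L = Max (lf ` P)"
  have "Q L y" for y
  proof -
    have "y \<in> \<Union>\<F>" using F(3) by blast
    then obtain p where p: "p \<in> P" "y \<in> cyl (mf p) p" unfolding P(2) by blast
    then have "Q (lf p) y" using mlf by blast
    moreover have "lf p \<le> L" unfolding L_def using P(1) p(1) by simp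
    ultimately show ?thesis using mono by blast
  qed
  then show ?thesis by blast
qed



definition pre :: "'a \<Rightarrow> (nat \<Rightarrow> 'a) \<Rightarrow> (nat \<Rightarrow> 'a)" where
  "pre a y = (\<lambda>i. case i of 0 \<Rightarrow> a | Suc j \<Rightarrow> y j)"

lemma shift_pre [simp]: "shift (pre a y) = y"
  by (simp add: shift_def pre_def)

lemma pre_shift: "pre (x 0) (shift x) = x"
  by (rule ext) (simp add: pre_def shift_def split: nat.split)

lemma pre_0 [simp]: "pre a y 0 = a" by (simp add: pre_def)
lemma pre_Suc [simp]: "pre a y (Suc i) = y i" by (simp add: pre_def)

lemma tau_shift: "tau n d (shift x) = shift (tau n d x)"
proof (rule ext)
  fix i
  have "map (\<lambda>i. x (Suc i)) [i..<i+n] = map x [Suc i..<Suc i+n]"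
    by (simp only: add_Suc map_Suc_upt[symmetric] map_map comp_def)
  then show "tau n d (shift x) i = shift (tau n d x) i"
    by (simp only: tau_def shift_def)
qed

lemma tau_comm: "tau n d \<circ> shift = shift \<circ> tau n d"
  by (rule ext) (simp add: tau_shift)

lemma tau_pre0: "n \<ge> 1 \<Longrightarrow> tau n d (pre a y) 0 = d (a # map y [0..<n-1])"
proof -
  assume "n \<ge> 1"
  then obtain m where m: "n = Suc m" by (cases n) auto
  have e1: "map (pre a y) [Suc 0..<Suc m] = map y [0..<m]"
    by (simp only: map_Suc_upt[symmetric] map_map comp_def pre_Suc)
  have e: "map (pre a y) [0..<Suc m] = a # map y [0..<m]"
    by (simp only: upt_conv_Cons[OF zero_less_Suc] list.map pre_0 e1)
  show ?thesis unfolding tau_def m by (simp del: upt_Suc add: e)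
qed

lemma tau_pre_Suc: "tau n d (pre a y) (Suc i) = tau n d y i"
  using fun_cong[OF tau_shift[of n d "pre a y"], of i] by (simp add: shift_def)

lemma tau_local: "x' \<in> cyl (l+n) x \<Longrightarrow> tau n d x' \<in> cyl l (tau n d x)"
proof -
  assume "x' \<in> cyl (l+n) x"
  then have "\<forall>i<l+n. x' i = x i" by (simp add: cyl_def)
  have "tau n d x' i = tau n d x i" if "i < l" for i
  proof -
    have "map x' [i..<i+n] = map x [i..<i+n]"
      by (rule map_cong) (use \<open>\<forall>i<l+n. x' i = x i\<close> that in auto)
    then show ?thesis unfolding tau_def by (rule arg_cong)
  qed
  then show ?thesis by (simp add: cyl_def)
qed

lemma shift_pow: "(shift ^^ j) x = (\<lambda>i. x (i+j))"
  by (induction j arbitrary: x) (auto simp: shift_def)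

lemma tau_shift_pow: "tau n d ((shift ^^ j) x) = (shift ^^ j) (tau n d x)"
  by (induction j) (auto simp: tau_shift)

lemma ex1_two: "\<exists>!x. P x \<Longrightarrow> P a \<Longrightarrow> P b \<Longrightarrow> a = b"
  by (erule ex1E) (metis)

lemma reg_star:
  assumes "regressive n d"
  shows "star_commute (tau n d) shift"
  unfolding star_commute_def
proof (intro conjI allI impI)
  show "tau n d \<circ> shift = shift \<circ> tau n d" by (rule tau_comm)
next
  fix y z assume yz: "tau n d y = shift z"
  have n: "n \<ge> 1" and b: "bij (\<lambda>a. d (a # map y [0..<n-1]))"
    using assms by (auto simp: regressive_def)
  have "\<exists>a. z 0 = d (a # map y [0..<n-1])"
    using surjD[OF bij_is_surj[OF b], of "z 0"] by simp
  then obtain a where a: "z 0 = d (a # map y [0..<n-1])" by (elim exE)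
  have ex: "tau n d (pre a y) = z"
  proof (rule ext)
    fix i show "tau n d (pre a y) i = z i"
    proof (cases i)
      case 0 then show ?thesis using a tau_pre0[OF n] by simp
    next
      case (Suc j) then show ?thesis
        using tau_pre_Suc[of n d a y j] fun_cong[OF yz, of j] by (simp add: shift_def)
    qed
  qed
  show "\<exists>!x. shift x = y \<and> tau n d x = z"
  proof (rule ex1I[of _ "pre a y"])
    show "shift (pre a y) = y \<and> tau n d (pre a y) = z" using ex by simp
  next
    fix x assume x: "shift x = y \<and> tau n d x = z"
    have "tau n d (pre (x 0) (shift x)) 0 = z 0" unfolding pre_shift using x by simp
    then have "d (x 0 # map y [0..<n-1]) = d (a # map y [0..<n-1])"
      using tau_pre0[OF n, of d "x 0" y] x a by simp
    then have "x 0 = a" using injD[OF bij_is_inj[OF b]] by simp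
    then show "x = pre a y" using pre_shift[of x] x by simp
  qed
qed

lemma star_reg:
  assumes n: "n \<ge> 1" and sc: "star_commute (tau n d) shift"
  shows "regressive n d"
  unfolding regressive_def
proof (intro conjI allI impI n)
  fix w :: "'a list" assume w: "length w = n - 1"
  define y where "y = (\<lambda>i. w ! i)"
  have my: "map y [0..<n-1] = w" using w map_nth[of w] by (simp add: y_def)
  have U: "\<And>y z. tau n d y = shift z \<Longrightarrow> \<exists>!x. shift x = y \<and> tau n d x = z"
    using sc by (simp add: star_commute_def)
  have "inj (\<lambda>a. d (a # w))"
  proof (rule injI)
    fix a b assume ab: "d (a # w) = d (b # w)"
    have eq: "tau n d (pre a y) = tau n d (pre b y)"
    proof (rule ext)
      fix i show "tau n d (pre a y) i = tau n d (pre b y) i"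
        by (cases i) (simp_all add: tau_pre0[OF n] my[simplified] ab tau_pre_Suc)
    qed
    have h: "tau n d y = shift (tau n d (pre a y))"
      by (simp add: tau_shift[symmetric])
    have "pre a y = pre b y"
      by (rule ex1_two[OF U[OF h]]) (simp_all add: eq)
    then have "pre a y 0 = pre b y 0" by simp
    then show "a = b" by simp
  qed
  moreover have "surj (\<lambda>a. d (a # w))"
  proof -
    have "c \<in> range (\<lambda>a. d (a # w))" for c
    proof -
      have h: "tau n d y = shift (pre c (tau n d y))" by simp
      have "\<exists>x. shift x = y \<and> tau n d x = pre c (tau n d y)"
        by (rule ex1_implies_ex[OF U[OF h]])
      then obtain x where x: "shift x = y" "tau n d x = pre c (tau n d y)" by (elim exE conjE)
      have "tau n d (pre (x 0) y) 0 = c"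
        using x pre_shift[of x] by simp
      then have "d (x 0 # w) = c" by (simp add: tau_pre0[OF n] my[simplified])
      then show ?thesis using rangeI[of "\<lambda>a. d (a # w)" "x 0"] by simp
    qed
    then show ?thesis by blast
  qed
  ultimately show "bij (\<lambda>a. d (a # w))" by (simp add: bij_def)
qed



lemma cont_tau: "continuous_map seq_top seq_top (tau n d)"
  unfolding continuous_map_def
proof (intro conjI allI impI)
  show "tau n d \<in> topspace seq_top \<rightarrow> topspace seq_top" by simp
next
  fix U :: "(nat \<Rightarrow> 'a) set" assume U: "openin seq_top U"
  show "openin seq_top {x \<in> topspace seq_top. tau n d x \<in> U}"
    unfolding openin_seq_top
  proof
    fix x assume "x \<in> {x \<in> topspace seq_top. tau n d x \<in> U}"
    then obtain m where "cyl m (tau n d x) \<subseteq> U" using U unfolding openin_seq_top by auto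
    then have "cyl (m+n) x \<subseteq> {x \<in> topspace seq_top. tau n d x \<in> U}"
      using tau_local by fastforce
    then show "\<exists>m. cyl m x \<subseteq> {x \<in> topspace seq_top. tau n d x \<in> U}" by blast
  qed
qed

lemma open_map_lh:
  fixes f :: "(nat \<Rightarrow> 'a) \<Rightarrow> (nat \<Rightarrow> 'a)"
  assumes lh: "local_homeo seq_top seq_top f"
  shows "open_map seq_top seq_top f"
  unfolding open_map_def
proof (intro allI impI)
  fix W :: "(nat \<Rightarrow> 'a) set" assume W: "openin seq_top W"
  show "openin seq_top (f ` W)"
    unfolding openin_subopen[of _ "f ` W"]
  proof
    fix b assume "b \<in> f ` W"
    then obtain x where x: "x \<in> W" "b = f x" by blast
    obtain U where U: "openin seq_top U" "x \<in> U" "openin seq_top (f ` U)"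
      "homeomorphic_map (subtopology seq_top U) (subtopology seq_top (f ` U)) f"
      using lh unfolding local_homeo_def by auto
    have "openin (subtopology seq_top U) (W \<inter> U)"
      using W U(1) by (simp add: openin_open_subtopology openin_Int)
    then have "openin (subtopology seq_top (f ` U)) (f ` (W \<inter> U))"
      using homeomorphic_map_openness_eq[OF U(4)] by blast
    then have "openin seq_top (f ` (W \<inter> U))"
      using openin_open_subtopology[OF U(3)] by blast
    then show "\<exists>T. openin seq_top T \<and> b \<in> T \<and> T \<subseteq> f ` W"
      using x U(2) by blast
  qed
qed

lemma lh_inj:
  fixes f :: "(nat \<Rightarrow> 'a) \<Rightarrow> (nat \<Rightarrow> 'a)"
  assumes lh: "local_homeo seq_top seq_top f"
  shows "\<exists>m. inj_on f (cyl m x)"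
proof -
  obtain U where U: "openin seq_top U" "x \<in> U"
      "homeomorphic_map (subtopology seq_top U) (subtopology seq_top (f ` U)) f"
      using lh unfolding local_homeo_def by auto
  have "inj_on f U"
    using homeomorphic_imp_injective_map[OF U(3)] by simp
  moreover obtain m where "cyl m x \<subseteq> U" using U openin_seq_top by blast
  ultimately show ?thesis using inj_on_subset by blast
qed


lemma cyl_trans: "y \<in> cyl m x \<Longrightarrow> z \<in> cyl m y \<Longrightarrow> z \<in> cyl m x"
  by (auto simp: cyl_def)

lemma cyl_common: "z \<in> cyl m x \<Longrightarrow> z \<in> cyl m y \<Longrightarrow> y \<in> cyl m x"
  by (auto simp: cyl_def)

lemma fwd:
  fixes n and d :: "'a::finite list \<Rightarrow> 'a"
  assumes lh: "local_homeo seq_top seq_top (tau n d)"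
    and sc: "star_commute (tau n d) shift"
  shows "\<exists>k\<ge>1. k_fold_covering_map k seq_top seq_top (tau n d)"
proof -
  let ?f = "tau n d"
  have "\<exists>M. \<forall>y. \<forall>z\<in>cyl M y. ?f z = ?f y \<longrightarrow> z = y"
  proof (rule uniform)
    fix x
    obtain m where m: "inj_on ?f (cyl m x)" using lh_inj[OF lh] by blast
    have "\<forall>y\<in>cyl m x. \<forall>z\<in>cyl m y. ?f z = ?f y \<longrightarrow> z = y"
    proof (intro ballI impI)
      fix y z assume yz: "y \<in> cyl m x" "z \<in> cyl m y" "?f z = ?f y"
      have "z \<in> cyl m x" using yz(1,2) by (rule cyl_trans)
      then show "z = y" using m yz(3) yz(1) unfolding inj_on_def by blast
    qed
    then show "\<exists>m l. \<forall>y\<in>cyl m x. \<forall>z\<in>cyl l y. ?f z = ?f y \<longrightarrow> z = y" by blast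
  next
    fix l l' y
    assume "\<forall>z\<in>cyl l y. ?f z = ?f y \<longrightarrow> z = y" "l \<le> l'"
    then show "\<forall>z\<in>cyl l' y. ?f z = ?f y \<longrightarrow> z = (y :: nat \<Rightarrow> 'a)"
      using cyl_mono by blast
  qed
  then obtain M where I: "\<And>y z. z \<in> cyl M y \<Longrightarrow> ?f z = ?f y \<Longrightarrow> z = y" by blast
  have om: "open_map seq_top seq_top ?f" by (rule open_map_lh[OF lh])
  have "\<exists>L. \<forall>y. cyl L (?f y) \<subseteq> ?f ` cyl M y"
  proof (rule uniform)
    fix x :: "nat \<Rightarrow> 'a"
    have "openin seq_top (?f ` cyl M x)" using om openin_cyl unfolding open_map_def by blast
    moreover have "?f x \<in> ?f ` cyl M x" by simp
    ultimately have "\<exists>m. cyl m (?f x) \<subseteq> ?f ` cyl M x"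
      unfolding openin_seq_top by (rule bspec)
    then obtain l0 where l0: "cyl l0 (?f x) \<subseteq> ?f ` cyl M x" by (elim exE)
    have "\<forall>y\<in>cyl (M + l0 + n) x. cyl l0 (?f y) \<subseteq> ?f ` cyl M y"
    proof
      fix y assume y: "y \<in> cyl (M + l0 + n) x"
      then have A: "y \<in> cyl M x" and B: "y \<in> cyl (l0 + n) x"
        using cyl_mono[of M "M+l0+n" x] cyl_mono[of "l0+n" "M+l0+n" x] by auto
      have "cyl M y = cyl M x" using A by (rule cyl_eq)
      moreover have "cyl l0 (?f y) = cyl l0 (?f x)" using tau_local[OF B] by (rule cyl_eq)
      ultimately show "cyl l0 (?f y) \<subseteq> ?f ` cyl M y" using l0 by simp
    qed
    then show "\<exists>m l. \<forall>y\<in>cyl m x. cyl l (?f y) \<subseteq> ?f ` cyl M y" by blast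
  next
    fix l l' and y :: "nat \<Rightarrow> 'a"
    assume "cyl l (?f y) \<subseteq> ?f ` cyl M y" "l \<le> l'"
    then show "cyl l' (?f y) \<subseteq> ?f ` cyl M y" using cyl_mono by blast
  qed
  then obtain L where Lf: "\<And>y. cyl L (?f y) \<subseteq> ?f ` cyl M y" by blast
  define F where "F b = {x. ?f x = b}" for b
  have finF: "finite (F b)" for b
  proof -
    have "inj_on (\<lambda>x. map x [0..<M]) (F b)"
    proof (rule inj_onI)
      fix x y assume "x \<in> F b" "y \<in> F b" "map x [0..<M] = map y [0..<M]"
      then have "y \<in> cyl M x" "?f y = ?f x" by (auto simp: cyl_def F_def map_eq_conv)
      then show "x = y" using I[of y x] by simp
    qed
    moreover have "(\<lambda>x. map x [0..<M]) ` F b \<subseteq> {xs. set xs \<subseteq> UNIV \<and> length xs = M}" by auto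
    moreover have "finite {xs. set xs \<subseteq> (UNIV::'a set) \<and> length xs = M}"
      by (rule finite_lists_length_eq) simp
    ultimately show ?thesis by (meson finite_imageD finite_subset)
  qed
  have le: "card (F b) \<le> card (F b')" if b': "b' \<in> cyl L b" for b b'
  proof -
    define g where "g x = (SOME x'. x' \<in> cyl M x \<and> ?f x' = b')" for x
    have g: "g x \<in> cyl M x \<and> ?f (g x) = b'" if "x \<in> F b" for x
    proof -
      have "b' \<in> cyl L (?f x)" using that b' by (simp add: F_def)
      then have "\<exists>x'. x' \<in> cyl M x \<and> ?f x' = b'" using Lf by blast
      then show ?thesis unfolding g_def by (rule someI_ex)
    qed
    have "inj_on g (F b)"
    proof (rule inj_onI)
      fix x y assume xy: "x \<in> F b" "y \<in> F b" "g x = g y"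
      have "g x \<in> cyl M x" using g xy(1) by blast
      moreover have "g y \<in> cyl M y" using g xy(2) by blast
      ultimately have "g x \<in> cyl M x" "g x \<in> cyl M y" using xy(3) by simp_all
      then have "y \<in> cyl M x" by (rule cyl_common)
      moreover have "?f y = ?f x" using xy by (simp add: F_def)
      ultimately show "x = y" using I[of y x] by simp
    qed
    moreover have "g ` F b \<subseteq> F b'" using g by (auto simp: F_def)
    ultimately show ?thesis using finF card_inj_on_le by blast
  qed
  have loc: "card (F b) = card (F b')" if "b' \<in> cyl L b" for b b'
    using le[OF that] le[OF cyl_sym[OF that]] by simp
  have sh: "card (F z) = card (F (shift z))" for z
  proof -
    have U: "\<And>y z. ?f y = shift z \<Longrightarrow> \<exists>!x. shift x = y \<and> ?f x = z"
      using sc by (simp add: star_commute_def)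
    have "bij_betw shift (F z) (F (shift z))"
      unfolding bij_betw_def
    proof
      show "inj_on shift (F z)"
      proof (rule inj_onI)
        fix x y assume xy: "x \<in> F z" "y \<in> F z" "shift x = shift y"
        have "?f (shift x) = shift z" using xy by (simp add: F_def tau_shift)
        have "shift x = shift x \<and> ?f x = z" "shift y = shift x \<and> ?f y = z"
          using xy by (auto simp: F_def)
        then show "x = y" by (rule ex1_two[OF U[OF \<open>?f (shift x) = shift z\<close>]])
      qed
      show "shift ` F z = F (shift z)"
      proof
        show "shift ` F z \<subseteq> F (shift z)" by (auto simp: F_def tau_shift)
        show "F (shift z) \<subseteq> shift ` F z"
        proof
          fix y assume "y \<in> F (shift z)"
          then have "?f y = shift z" by (simp add: F_def)
          then have "\<exists>x. shift x = y \<and> ?f x = z" by (rule ex1_implies_ex[OF U])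
          then obtain x where "shift x = y" "?f x = z" by blast
          then show "y \<in> shift ` F z" by (auto simp: F_def)
        qed
      qed
    qed
    then show ?thesis by (rule bij_betw_same_card)
  qed
  have shp: "card (F z) = card (F ((shift ^^ j) z))" for z j
    by (induction j) (simp_all add: sh[symmetric])
  define x0 :: "nat \<Rightarrow> 'a" where "x0 = undefined"
  define k where "k = card (F (?f x0))"
  have const: "card (F c) = k" for c
  proof -
    define b' where "b' = (\<lambda>i. if i < L then ?f x0 i else c (i - L))"
    have "b' \<in> cyl L (?f x0)" by (simp add: b'_def cyl_def)
    then have "k = card (F b')" using loc k_def by blast
    also have "\<dots> = card (F ((shift ^^ L) b'))" by (rule shp)
    also have "(shift ^^ L) b' = c" by (simp add: shift_pow b'_def)
    finally show ?thesis by simp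
  qed
  have k1: "k \<ge> 1"
  proof -
    have "x0 \<in> F (?f x0)" by (simp add: F_def)
    show ?thesis
    proof -
      have "F (?f x0) \<noteq> {}" using \<open>x0 \<in> F (?f x0)\<close> by blast
      then have "card (F (?f x0)) > 0" using finF by (simp add: card_gt_0_iff)
      then show ?thesis unfolding k_def by simp
    qed
  qed
  have surj: "?f ` UNIV = UNIV"
  proof -
    have "c \<in> range ?f" for c
    proof -
      have "F c \<noteq> {}" using const[of c] k1 by auto
      then show ?thesis by (auto simp: F_def)
    qed
    then show ?thesis by blast
  qed
  have cont: "continuous_map seq_top seq_top ?f" by (rule cont_tau)
  have ev: "evenly_covered seq_top seq_top ?f (cyl L b)" for b
    unfolding evenly_covered_def
  proof (intro conjI exI)
    let ?U = "cyl L b"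
    let ?V = "(\<lambda>x. cyl M x \<inter> {z \<in> topspace seq_top. ?f z \<in> ?U}) ` F b"
    show "openin seq_top ?U" by (rule openin_cyl)
    show "\<forall>V\<in>?V. openin seq_top V \<and> homeomorphic_map (subtopology seq_top V) (subtopology seq_top ?U) ?f"
    proof
      fix V assume "V \<in> ?V"
      then obtain x where x: "x \<in> F b" "V = cyl M x \<inter> {z \<in> topspace seq_top. ?f z \<in> ?U}" by blast
      have oV: "openin seq_top V"
        unfolding x(2)
        by (rule openin_Int[OF openin_cyl openin_continuous_map_preimage[OF cont openin_cyl]])
      have "homeomorphic_map (subtopology seq_top V) (subtopology seq_top ?U) ?f"
      proof (rule bijective_open_imp_homeomorphic_map)
        show "continuous_map (subtopology seq_top V) (subtopology seq_top ?U) ?f"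
          by (rule continuous_map_into_subtopology[OF continuous_map_from_subtopology[OF cont]])
             (auto simp: x(2))
        show "open_map (subtopology seq_top V) (subtopology seq_top ?U) ?f"
          unfolding open_map_def
        proof (intro allI impI)
          fix W assume "openin (subtopology seq_top V) W"
          then have W: "openin seq_top W" "W \<subseteq> V" using openin_open_subtopology[OF oV] by auto
          then have "openin seq_top (?f ` W)" using om unfolding open_map_def by blast
          moreover have "?f ` W \<subseteq> ?U" using W(2) x(2) by auto
          ultimately show "openin (subtopology seq_top ?U) (?f ` W)"
            using openin_open_subtopology[OF openin_cyl] by blast
        qed
        have "?f ` V = ?U"
        proof
          show "?f ` V \<subseteq> ?U" using x(2) by auto
          show "?U \<subseteq> ?f ` V"
          proof
            fix b' assume b': "b' \<in> ?U"
            then have "b' \<in> cyl L (?f x)" using x(1) by (simp add: F_def)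
            then obtain x' where "x' \<in> cyl M x" "?f x' = b'" using Lf by blast
            then have "x' \<in> V" using b' x(2) by simp
            then show "b' \<in> ?f ` V" using \<open>?f x' = b'\<close> by blast
          qed
        qed
        then show "?f ` topspace (subtopology seq_top V) = topspace (subtopology seq_top ?U)"
          by simp
        show "inj_on ?f (topspace (subtopology seq_top V))"
        proof (rule inj_onI)
          fix y1 y2 assume "y1 \<in> topspace (subtopology seq_top V)" "y2 \<in> topspace (subtopology seq_top V)"
            "?f y1 = ?f y2"
          then have "y1 \<in> cyl M x" "y2 \<in> cyl M x" "?f y1 = ?f y2" using x(2) by auto
          then have "y2 \<in> cyl M y1" "?f y2 = ?f y1" using cyl_trans[OF cyl_sym] by auto
          then show "y1 = y2" using I[of y2 y1] by simp
        qed
      qed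
      then show "openin seq_top V \<and> homeomorphic_map (subtopology seq_top V) (subtopology seq_top ?U) ?f"
        using oV by blast
    qed
    show "pairwise disjnt ?V"
    proof (rule pairwiseI)
      fix V1 V2 assume "V1 \<in> ?V" "V2 \<in> ?V" "V1 \<noteq> V2"
      then obtain x1 x2 where x: "x1 \<in> F b" "x2 \<in> F b"
        "V1 = cyl M x1 \<inter> {z \<in> topspace seq_top. ?f z \<in> ?U}"
        "V2 = cyl M x2 \<inter> {z \<in> topspace seq_top. ?f z \<in> ?U}" "x1 \<noteq> x2" by blast
      show "disjnt V1 V2"
      proof (rule ccontr)
        assume "\<not> disjnt V1 V2"
        then obtain z where "z \<in> cyl M x1" "z \<in> cyl M x2" using x by (auto simp: disjnt_def)
        then have "x2 \<in> cyl M x1" by (rule cyl_common)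
        moreover have "?f x2 = ?f x1" using x by (simp add: F_def)
        ultimately show False using I[of x2 x1] x(5) by simp
      qed
    qed
    show "\<Union>?V = {x \<in> topspace seq_top. ?f x \<in> ?U}"
    proof
      show "\<Union>?V \<subseteq> {x \<in> topspace seq_top. ?f x \<in> ?U}" by auto
      show "{x \<in> topspace seq_top. ?f x \<in> ?U} \<subseteq> \<Union>?V"
      proof
        fix x' assume "x' \<in> {x \<in> topspace seq_top. ?f x \<in> ?U}"
        then have x': "?f x' \<in> ?U" by simp
        then have "b \<in> cyl L (?f x')" by (rule cyl_sym)
        then obtain x where x: "x \<in> cyl M x'" "?f x = b" using Lf by blast
        then have "x \<in> F b" "x' \<in> cyl M x" by (auto simp: F_def intro: cyl_sym)
        then have "x' \<in> cyl M x \<inter> {z \<in> topspace seq_top. ?f z \<in> ?U}" using x' by simp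
        moreover have "cyl M x \<inter> {z \<in> topspace seq_top. ?f z \<in> ?U} \<in> ?V"
          using \<open>x \<in> F b\<close> by (rule imageI)
        ultimately show "x' \<in> \<Union>?V" by (rule UnionI[rotated])
      qed
    qed
  qed
  have "k_fold_covering_map k seq_top seq_top ?f"
    unfolding k_fold_covering_map_def covering_map_def
  proof (intro conjI ballI cont)
    show "?f ` topspace seq_top = topspace seq_top" using surj by simp
    show "\<exists>U. b \<in> U \<and> evenly_covered seq_top seq_top ?f U" for b
      using ev cyl_self by blast
    show "finite {x \<in> topspace seq_top. ?f x = b}" for b
      using finF[of b] by (simp add: F_def)
    show "card {x \<in> topspace seq_top. ?f x = b} = k" for b
      using const[of b] by (simp add: F_def)
  qed
  then show ?thesis using k1 by blast
qed

lemma bwd: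
  fixes f :: "(nat \<Rightarrow> 'a) \<Rightarrow> (nat \<Rightarrow> 'a)"
  assumes "k_fold_covering_map k seq_top seq_top f"
  shows "local_homeo seq_top seq_top f"
proof -
  have cov: "covering_map seq_top seq_top f"
    using assms by (simp add: k_fold_covering_map_def)
  then have cont: "continuous_map seq_top seq_top f" by (simp add: covering_map_def)
  show ?thesis
    unfolding local_homeo_def
  proof (intro conjI ballI cont)
    fix x :: "nat \<Rightarrow> 'a" assume "x \<in> topspace seq_top"
    obtain U where U: "f x \<in> U" "evenly_covered seq_top seq_top f U"
      using cov unfolding covering_map_def by auto
    then obtain \<V> where V: "openin seq_top U"
      "\<forall>V\<in>\<V>. openin seq_top V \<and> homeomorphic_map (subtopology seq_top V) (subtopology seq_top U) f"
      "\<Union>\<V> = {x \<in> topspace seq_top. f x \<in> U}"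
      unfolding evenly_covered_def by blast
    then obtain V where "V \<in> \<V>" "x \<in> V" using U(1) by auto
    then have hV: "openin seq_top V" "homeomorphic_map (subtopology seq_top V) (subtopology seq_top U) f"
      using V(2) by auto
    have "f ` V = U"
      using homeomorphic_imp_surjective_map[OF hV(2)] by simp
    then show "\<exists>U. openin seq_top U \<and> x \<in> U \<and> openin seq_top (f ` U) \<and>
          homeomorphic_map (subtopology seq_top U) (subtopology seq_top (f ` U)) f"
    proof (intro exI[of _ V] conjI)
      show "openin seq_top V" "x \<in> V" by (fact hV(1), fact)
      show "openin seq_top (f ` V)" using \<open>f ` V = U\<close> V(1) by simp
      show "homeomorphic_map (subtopology seq_top V) (subtopology seq_top (f ` V)) f"
        using hV(2) \<open>f ` V = U\<close> by simp
    qed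
  qed
qed


theorem theorem5p14:
  fixes \<phi> :: "(nat \<Rightarrow> 'a::finite) \<Rightarrow> (nat \<Rightarrow> 'a)"
  assumes "sliding_block_code \<phi>"
  shows "(local_homeo seq_top seq_top \<phi> \<and> star_commute \<phi> shift) \<longleftrightarrow>
         (\<exists>k\<ge>1. k_fold_covering_map k seq_top seq_top \<phi> \<and>
                 (\<exists>n d. regressive n d \<and> \<phi> = tau n d))"
proof -
  obtain n0 d0 where nd: "n0 \<ge> 1" "\<phi> = tau n0 d0"
    using assms unfolding sliding_block_code_def by blast
  show ?thesis
  proof
    assume H: "local_homeo seq_top seq_top \<phi> \<and> star_commute \<phi> shift"
    then have "star_commute (tau n0 d0) shift" using nd(2) by simp
    then have "regressive n0 d0" by (rule star_reg[OF nd(1)])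
    moreover obtain k where "k \<ge> 1" "k_fold_covering_map k seq_top seq_top \<phi>"
      using fwd[of n0 d0] H unfolding nd(2) by blast
    ultimately show "\<exists>k\<ge>1. k_fold_covering_map k seq_top seq_top \<phi> \<and>
                 (\<exists>n d. regressive n d \<and> \<phi> = tau n d)" using nd(2) by blast
  next
    assume "\<exists>k\<ge>1. k_fold_covering_map k seq_top seq_top \<phi> \<and>
                 (\<exists>n d. regressive n d \<and> \<phi> = tau n d)"
    then obtain k n d where "k_fold_covering_map k seq_top seq_top \<phi>" "regressive n d" "\<phi> = tau n d"
      by blast
    then show "local_homeo seq_top seq_top \<phi> \<and> star_commute \<phi> shift"
      using bwd[of k \<phi>] reg_star[of n d] by simp
  qed
qed


end
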